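(* Let $G=(V,E)$ be a graph and let $u_1\in V$ be a universal vertex (adjacent to all other vertices). (1) If $G$ has another universal vertex $u_2\neq u_1$, then the perfect dominating sets of $G$ are exactly $V$ and the singletons $\{u\}$ with $u$ a universal vertex of $G$. (2) If $u_1$ is the unique universal vertex of $G$, then every perfect dominating set of $G$ contains $u_1$. Moreover, let $G_1=(V_1,E_1),\dots,G_k=(V_k,E_k)$ be the connected components of $G-u_1$. Then (a) every perfect dominating set $D$ of $G$ satisfies, for each $i$ and each $w\in V_i$: $w\in D$ if and only if $V_i\subseteq D$ (i.e., each $V_i$ is either contained in $D$ or disjoint from $D$); and (b) every subset $V'\subseteq V$ that contains $u_1$ and satisfies the property in (a) is a perfect dominating set of $G$.
   Context: A perfect dominating set of a graph $G$ is a set $D\subseteq V(G)$ such that every vertex $v\in V(G)\setminus D$ is adjacent to exactly one vertex of $D$. *)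

theory Defs
  imports Main
begin

definition graph :: "'a set \<Rightarrow> ('a \<Rightarrow> 'a \<Rightarrow> bool) \<Rightarrow> bool" where
  "graph V E \<longleftrightarrow> finite V \<and> (\<forall>x y. E x y \<longrightarrow> x \<in> V \<and> y \<in> V)
     \<and> (\<forall>x y. E x y \<longrightarrow> E y x) \<and> (\<forall>x. \<not> E x x)"

definition universal :: "'a set \<Rightarrow> ('a \<Rightarrow> 'a \<Rightarrow> bool) \<Rightarrow> 'a \<Rightarrow> bool" where
  "universal V E u \<longleftrightarrow> u \<in> V \<and> (\<forall>v \<in> V. v \<noteq> u \<longrightarrow> E u v)"

definition perfect_dominating :: "'a set \<Rightarrow> ('a \<Rightarrow> 'a \<Rightarrow> bool) \<Rightarrow> 'a set \<Rightarrow> bool" where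
  "perfect_dominating V E D \<longleftrightarrow> D \<subseteq> V \<and> (\<forall>v \<in> V - D. \<exists>!d. d \<in> D \<and> E v d)"

definition comp_of :: "'a set \<Rightarrow> ('a \<Rightarrow> 'a \<Rightarrow> bool) \<Rightarrow> 'a \<Rightarrow> 'a set" where
  "comp_of S E w = {x. (\<lambda>a b. a \<in> S \<and> b \<in> S \<and> E a b)\<^sup>*\<^sup>* w x}"

definition components :: "'a set \<Rightarrow> ('a \<Rightarrow> 'a \<Rightarrow> bool) \<Rightarrow> 'a set set" where
  "components S E = {comp_of S E w | w. w \<in> S}"

end

theory Submission
  imports Defs
begin

lemma path_pres:
  assumes "\<And>a b. a \<in> S \<Longrightarrow> b \<in> S \<Longrightarrow> E a b \<Longrightarrow> (a \<in> D \<longleftrightarrow> b \<in> D)"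
  shows "(\<lambda>a b. a \<in> S \<and> b \<in> S \<and> E a b)\<^sup>*\<^sup>* x y \<Longrightarrow> (x \<in> D \<longleftrightarrow> y \<in> D)"
  by (induction rule: rtranclp_induct) (use assms in auto)

lemma part1:
  assumes g: "graph V E" and u1: "universal V E u1" and u2: "universal V E u2" and ne: "u2 \<noteq> u1"
  shows "perfect_dominating V E D \<longleftrightarrow> D = V \<or> (\<exists>u. universal V E u \<and> D = {u})"
proof
  assume pd: "perfect_dominating V E D"
  hence DV: "D \<subseteq> V" and uq: "\<And>v. v \<in> V - D \<Longrightarrow> \<exists>!d. d \<in> D \<and> E v d"
    unfolding perfect_dominating_def by auto
  have u1V: "u1 \<in> V" and u2V: "u2 \<in> V" using u1 u2 unfolding universal_def by auto
  show "D = V \<or> (\<exists>u. universal V E u \<and> D = {u})"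
  proof (cases "D = V")
    case True then show ?thesis by simp
  next
    case False
    then obtain v where v: "v \<in> V" "v \<notin> D" using DV by auto
    obtain d where d: "d \<in> D" "E v d" using uq[of v] v by auto
    have single: "D = {d}"
    proof (rule ccontr)
      assume "D \<noteq> {d}"
      then obtain d' where d': "d' \<in> D" "d' \<noteq> d" using d by auto
      show False
      proof (cases "u1 \<in> D")
        case False
        have "E u1 d" "E u1 d'" using u1 d d' DV False unfolding universal_def by auto
        thus False using uq[of u1] u1V False d d' by blast
      next
        case True
        note t1 = True
        show False
        proof (cases "u2 \<in> D")
          case False
          have "E u2 d" "E u2 d'" using u2 d d' DV False unfolding universal_def by auto
          thus False using uq[of u2] u2V False d d' by blast
        next
          case True
          have "v \<noteq> u1" "v \<noteq> u2" using v t1 True by auto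
          have "E u1 v" "E u2 v" using u1 u2 v \<open>v \<noteq> u1\<close> \<open>v \<noteq> u2\<close> unfolding universal_def by auto
          hence "E v u1" "E v u2" using g unfolding graph_def by auto
          thus False using uq[of v] v t1 True ne by blast
        qed
      qed
    qed
    have "universal V E d"
      unfolding universal_def
    proof (intro conjI ballI impI)
      show "d \<in> V" using d DV by auto
    next
      fix w assume "w \<in> V" "w \<noteq> d"
      then obtain e where "e \<in> D" "E w e" using uq[of w] single by auto
      hence "E w d" using single by auto
      thus "E d w" using g unfolding graph_def by auto
    qed
    thus ?thesis using single by auto
  qed
next
  assume "D = V \<or> (\<exists>u. universal V E u \<and> D = {u})"
  thus "perfect_dominating V E D"
  proof
    assume "D = V" thus ?thesis unfolding perfect_dominating_def by auto
  next
    assume "\<exists>u. universal V E u \<and> D = {u}"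
    then obtain u where u: "universal V E u" "D = {u}" by auto
    show ?thesis unfolding perfect_dominating_def
    proof (intro conjI ballI)
      show "D \<subseteq> V" using u unfolding universal_def by auto
    next
      fix v assume "v \<in> V - D"
      hence "E u v" using u unfolding universal_def by auto
      hence "E v u" using g unfolding graph_def by auto
      thus "\<exists>!d. d \<in> D \<and> E v d" using u by auto
    qed
  qed
qed

theorem lemma5:
  assumes "graph V E" and "universal V E u1"
  shows "((\<exists>u2. universal V E u2 \<and> u2 \<noteq> u1) \<longrightarrow>
           (\<forall>D. perfect_dominating V E D \<longleftrightarrow> D = V \<or> (\<exists>u. universal V E u \<and> D = {u})))
       \<and> ((\<forall>u. universal V E u \<longrightarrow> u = u1) \<longrightarrow>
           (\<forall>D. perfect_dominating V E D \<longrightarrow> u1 \<in> D)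
         \<and> (\<forall>D. perfect_dominating V E D \<longrightarrow>
               (\<forall>C \<in> components (V - {u1}) E. \<forall>w \<in> C. w \<in> D \<longleftrightarrow> C \<subseteq> D))
         \<and> (\<forall>D. D \<subseteq> V \<and> u1 \<in> D \<and>
               (\<forall>C \<in> components (V - {u1}) E. \<forall>w \<in> C. w \<in> D \<longleftrightarrow> C \<subseteq> D)
               \<longrightarrow> perfect_dominating V E D))"
proof -
  note g = assms(1) and u1 = assms(2)
  have sym: "\<And>a b. E a b \<Longrightarrow> E b a" and inV: "\<And>a b. E a b \<Longrightarrow> a \<in> V \<and> b \<in> V"
    using g unfolding graph_def by auto
  have u1V: "u1 \<in> V" using u1 unfolding universal_def by auto
  have E1: "\<And>v. v \<in> V \<Longrightarrow> v \<noteq> u1 \<Longrightarrow> E v u1" using u1 sym unfolding universal_def by auto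
  have A: "\<forall>D. perfect_dominating V E D \<longrightarrow> u1 \<in> D" if uniq: "\<forall>u. universal V E u \<longrightarrow> u = u1"
  proof (intro allI impI)
    fix D assume pd: "perfect_dominating V E D"
    hence DV: "D \<subseteq> V" and uq: "\<And>v. v \<in> V - D \<Longrightarrow> \<exists>!d. d \<in> D \<and> E v d"
      unfolding perfect_dominating_def by auto
    show "u1 \<in> D"
    proof (rule ccontr)
      assume n: "u1 \<notin> D"
      obtain d where d: "d \<in> D" "E u1 d" using uq[of u1] n u1V by auto
      have single: "D = {d}"
      proof (rule ccontr)
        assume "D \<noteq> {d}"
        then obtain d' where d': "d' \<in> D" "d' \<noteq> d" using d by auto
        have "E u1 d'" using u1 d' DV n unfolding universal_def by auto
        thus False using uq[of u1] u1V n d d' by blast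
      qed
      have "universal V E d"
        unfolding universal_def
      proof (intro conjI ballI impI)
        show "d \<in> V" using d DV by auto
      next
        fix w assume "w \<in> V" "w \<noteq> d"
        then obtain e where "e \<in> D" "E w e" using uq[of w] single by auto
        hence "E w d" using single by auto
        thus "E d w" using sym by auto
      qed
      hence "d = u1" using uniq by auto
      thus False using d n by auto
    qed
  qed
  have B: "\<forall>D. perfect_dominating V E D \<longrightarrow>
               (\<forall>C \<in> components (V - {u1}) E. \<forall>w \<in> C. w \<in> D \<longleftrightarrow> C \<subseteq> D)"
    if uniq: "\<forall>u. universal V E u \<longrightarrow> u = u1"
  proof (intro allI impI ballI)
    fix D C w assume pd: "perfect_dominating V E D" and C: "C \<in> components (V - {u1}) E" and w: "w \<in> C"
    have u1D: "u1 \<in> D" using A uniq pd by auto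
    have DV: "D \<subseteq> V" and uq: "\<And>v. v \<in> V - D \<Longrightarrow> \<exists>!d. d \<in> D \<and> E v d"
      using pd unfolding perfect_dominating_def by auto
    have pres: "a \<in> D \<longleftrightarrow> b \<in> D" if "a \<in> V - {u1}" "b \<in> V - {u1}" "E a b" for a b
    proof
      assume aD: "a \<in> D"
      show "b \<in> D"
      proof (rule ccontr)
        assume "b \<notin> D"
        moreover have "E b u1" "E b a" using E1 that sym by auto
        ultimately show False using uq[of b] that aD u1D by blast
      qed
    next
      assume bD: "b \<in> D"
      show "a \<in> D"
      proof (rule ccontr)
        assume "a \<notin> D"
        moreover have "E a u1" using E1 that by auto
        ultimately show False using uq[of a] that bD u1D by blast
      qed
    qed
    obtain w0 where C0: "C = comp_of (V - {u1}) E w0" using C unfolding components_def by auto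
    have P: "\<And>x. x \<in> C \<Longrightarrow> (w0 \<in> D \<longleftrightarrow> x \<in> D)"
      using path_pres[of "V - {u1}" E D, OF pres] C0 unfolding comp_of_def by blast
    show "w \<in> D \<longleftrightarrow> C \<subseteq> D" using P w by blast
  qed
  have Cc: "\<forall>D. D \<subseteq> V \<and> u1 \<in> D \<and>
               (\<forall>C \<in> components (V - {u1}) E. \<forall>w \<in> C. w \<in> D \<longleftrightarrow> C \<subseteq> D)
               \<longrightarrow> perfect_dominating V E D"
  proof (intro allI impI)
    fix D assume H: "D \<subseteq> V \<and> u1 \<in> D \<and>
               (\<forall>C \<in> components (V - {u1}) E. \<forall>w \<in> C. w \<in> D \<longleftrightarrow> C \<subseteq> D)"
    show "perfect_dominating V E D" unfolding perfect_dominating_def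
    proof (intro conjI ballI)
      show "D \<subseteq> V" using H by auto
    next
      fix v assume v: "v \<in> V - D"
      hence vn: "v \<noteq> u1" using H by auto
      show "\<exists>!d. d \<in> D \<and> E v d"
      proof (rule ex1I[of _ u1])
        show "u1 \<in> D \<and> E v u1" using H E1 v vn by auto
      next
        fix d assume d: "d \<in> D \<and> E v d"
        show "d = u1"
        proof (rule ccontr)
          assume dn: "d \<noteq> u1"
          let ?S = "V - {u1}"
          let ?C = "comp_of ?S E v"
          have Cm: "?C \<in> components ?S E" using v vn unfolding components_def by auto
          have "d \<in> ?C" using d dn vn v inV unfolding comp_of_def by auto
          moreover have "v \<in> ?C" unfolding comp_of_def by auto
          ultimately have "?C \<subseteq> D" "v \<in> ?C" using H Cm d by blast+
          thus False using v by auto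
        qed
      qed
    qed
  qed
  have P1: "(\<exists>u2. universal V E u2 \<and> u2 \<noteq> u1) \<longrightarrow>
           (\<forall>D. perfect_dominating V E D \<longleftrightarrow> D = V \<or> (\<exists>u. universal V E u \<and> D = {u}))"
  proof (intro impI allI)
    fix D assume "\<exists>u2. universal V E u2 \<and> u2 \<noteq> u1"
    then obtain u2 where "universal V E u2" "u2 \<noteq> u1" by blast
    thus "perfect_dominating V E D \<longleftrightarrow> D = V \<or> (\<exists>u. universal V E u \<and> D = {u})"
      using part1[OF g u1] by blast
  qed
  show ?thesis
    apply (rule conjI)
     apply (rule P1)
    apply (rule impI)
    apply (rule conjI)
     apply (erule A)
    apply (rule conjI)
     apply (erule B)
    apply (rule Cc)
    done
qed

end
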